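(* Let $B_1(0)\subseteq\mathbb{C}$ be the open unit disc and let $f, f_1, f_2: B_1(0)\setminus\{0\} \to \mathbb{C}$ be smooth functions, each of which either extends smoothly to the origin or is holomorphic on $B_1(0)\setminus\{0\}$ with a simple pole at the origin. Assume moreover that $f_1$ is holomorphic with a simple pole at the origin. Then the function \[ \varphi := \frac{f}{|f_1|^2 + |f_2|^2}, \qquad \varphi(0) := 0, \] is well defined and smooth in a neighbourhood of the origin. Moreover, if $f$ is holomorphic with a simple pole at the origin, then the real differential $D\varphi(0):\mathbb{R}^2\to\mathbb{R}^2$ has full rank. *)

theory Defs
  imports "HOL-Complex_Analysis.Complex_Analysis"
begin

text \<open>Iterated real (Frechet) directional derivatives of a function on the plane = complex numbers,
  viewed as a real 2-dimensional vector space.\<close>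
definition iter_dderiv :: "complex list \<Rightarrow> (complex \<Rightarrow> complex) \<Rightarrow> (complex \<Rightarrow> complex)" where
  "iter_dderiv ds f = fold (\<lambda>v g. \<lambda>z. frechet_derivative g (at z) v) ds f"

definition smooth_on :: "complex set \<Rightarrow> (complex \<Rightarrow> complex) \<Rightarrow> bool" where
  "smooth_on S f \<longleftrightarrow> (\<forall>ds. \<forall>z\<in>S. iter_dderiv ds f differentiable (at z))"

definition hol_simple_pole :: "(complex \<Rightarrow> complex) \<Rightarrow> bool" where
  "hol_simple_pole f \<longleftrightarrow> f holomorphic_on (ball 0 1 - {0}) \<and> is_pole f 0 \<and> zorder f 0 = -1"

definition admissible :: "(complex \<Rightarrow> complex) \<Rightarrow> bool" where
  "admissible f \<longleftrightarrow> smooth_on (ball 0 1 - {0}) f \<and>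
     ((\<exists>g. smooth_on (ball 0 1) g \<and> (\<forall>z\<in>ball 0 1 - {0}. g z = f z)) \<or> hol_simple_pole f)"

end

theory Submission
  imports Defs
begin

lemma iter_Cons: "iter_dderiv (v#ds) f = iter_dderiv ds (\<lambda>z. frechet_derivative f (at z) v)"
  by (simp add: iter_dderiv_def)

lemma iter_Nil: "iter_dderiv [] f = f"
  by (simp add: iter_dderiv_def)

lemma fderiv_local:
  assumes "open S" "z \<in> S" "\<forall>w\<in>S. f w = g w"
  shows "frechet_derivative f (at z) = frechet_derivative g (at z)"
proof -
  have "(f has_derivative D) (at z) \<longleftrightarrow> (g has_derivative D) (at z)" for D
    using has_derivative_transform_within_open[OF _ assms(1,2), of f D UNIV g]
      has_derivative_transform_within_open[OF _ assms(1,2), of g D UNIV f] assms(3) by auto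
  then show ?thesis unfolding frechet_derivative_def by simp
qed

lemma diff_local:
  assumes "open S" "z \<in> S" "\<forall>w\<in>S. f w = g w" "f differentiable (at z)"
  shows "g differentiable (at z)"
  using assms has_derivative_transform_within_open[OF _ assms(1,2), of f _ UNIV g]
  unfolding differentiable_def by auto

lemma iter_local:
  assumes "open S" "\<forall>w\<in>S. f w = g w" "z \<in> S"
  shows "iter_dderiv ds f z = iter_dderiv ds g z"
  using assms(2,3)
proof (induction ds arbitrary: f g z)
  case Nil then show ?case by (simp add: iter_Nil)
next
  case (Cons v ds)
  have "\<forall>w\<in>S. frechet_derivative f (at w) v = frechet_derivative g (at w) v"
    using fderiv_local[OF assms(1) _ Cons.prems(1)] by simp
  then show ?case using Cons.IH Cons.prems(2) by (simp add: iter_Cons)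
qed

lemma smooth_coind:
  assumes S: "open S" and Qf: "Q f"
    and D: "\<And>f z. Q f \<Longrightarrow> z \<in> S \<Longrightarrow> f differentiable (at z)"
    and C: "\<And>f v. Q f \<Longrightarrow> \<exists>h. Q h \<and> (\<forall>z\<in>S. frechet_derivative f (at z) v = h z)"
  shows "smooth_on S f"
proof -
  have "\<forall>f. Q f \<longrightarrow> (\<forall>z\<in>S. iter_dderiv ds f differentiable (at z))" for ds
  proof (induction ds)
    case Nil then show ?case using D by (simp add: iter_Nil)
  next
    case (Cons v ds)
    show ?case
    proof (intro allI impI ballI)
      fix f z assume "Q f" "z \<in> S"
      obtain h where h: "Q h" "\<forall>z\<in>S. frechet_derivative f (at z) v = h z" using C[OF \<open>Q f\<close>] by blast
      have "\<forall>w\<in>S. iter_dderiv ds h w = iter_dderiv ds (\<lambda>z. frechet_derivative f (at z) v) w"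
        using iter_local[OF S] h(2) by (metis (no_types, lifting))
      then show "iter_dderiv (v # ds) f differentiable at z"
        unfolding iter_Cons using diff_local[OF S \<open>z\<in>S\<close>] Cons.IH h(1) \<open>z\<in>S\<close> by blast
    qed
  qed
  then show ?thesis using Qf unfolding smooth_on_def by blast
qed

lemma smooth_differentiable: "smooth_on S f \<Longrightarrow> z \<in> S \<Longrightarrow> f differentiable (at z)"
  unfolding smooth_on_def by (metis iter_Nil)

lemma smooth_has_derivative: "smooth_on S f \<Longrightarrow> z \<in> S \<Longrightarrow> (f has_derivative frechet_derivative f (at z)) (at z)"
  using smooth_differentiable frechet_derivative_works by blast

lemma smooth_D: "smooth_on S f \<Longrightarrow> smooth_on S (\<lambda>z. frechet_derivative f (at z) v)"
  unfolding smooth_on_def by (metis iter_Cons)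

lemma smooth_mono: "T \<subseteq> S \<Longrightarrow> smooth_on S f \<Longrightarrow> smooth_on T f"
  unfolding smooth_on_def by blast

lemma smooth_local:
  assumes "open S" "smooth_on S f" "\<forall>z\<in>S. f z = g z"
  shows "smooth_on S g"
  unfolding smooth_on_def
proof (intro allI ballI)
  fix ds z assume z: "z \<in> S"
  have "\<forall>w\<in>S. iter_dderiv ds f w = iter_dderiv ds g w" using iter_local[OF assms(1,3)] by blast
  then show "iter_dderiv ds g differentiable at z"
    using diff_local[OF assms(1) z] assms(2) z unfolding smooth_on_def by blast
qed

lemma smooth_holomorphic:
  assumes S: "open S" and h: "g holomorphic_on S"
  shows "smooth_on S g"
proof (rule smooth_coind[OF S, where Q = "\<lambda>h. h holomorphic_on S"])
  show "g holomorphic_on S" by fact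
next
  fix f z assume "f holomorphic_on S" "z \<in> S"
  then show "f differentiable at z"
    using holomorphic_on_imp_differentiable_at[OF _ S] field_differentiable_imp_differentiable by blast
next
  fix f v assume f: "f holomorphic_on S"
  show "\<exists>h. h holomorphic_on S \<and> (\<forall>z\<in>S. frechet_derivative f (at z) v = h z)"
  proof (intro exI conjI ballI)
    show "(\<lambda>z. deriv f z * v) holomorphic_on S"
      using holomorphic_deriv[OF f S] by (auto intro!: holomorphic_intros)
    fix z assume z: "z \<in> S"
    have "f field_differentiable at z" using holomorphic_on_imp_differentiable_at[OF f S z] .
    then have "(f has_field_derivative deriv f z) (at z)" using DERIV_deriv_iff_field_differentiable by blast
    then have "(f has_derivative (\<lambda>v. deriv f z * v)) (at z)" by (simp add: has_field_derivative_def)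
    then show "frechet_derivative f (at z) v = deriv f z * v" using frechet_derivative_at by metis
  qed
qed

lemma smooth_add:
  assumes S: "open S" and f: "smooth_on S f" and g: "smooth_on S g"
  shows "smooth_on S (\<lambda>z. f z + g z)"
proof (rule smooth_coind[OF S, where Q = "\<lambda>h. \<exists>f g. smooth_on S f \<and> smooth_on S g \<and> (\<forall>z\<in>S. h z = f z + g z)"])
  show "\<exists>fa ga. smooth_on S fa \<and> smooth_on S ga \<and> (\<forall>z\<in>S. f z + g z = fa z + ga z)" using f g by blast
next
  fix h z assume "\<exists>f g. smooth_on S f \<and> smooth_on S g \<and> (\<forall>z\<in>S. h z = f z + g z)" "z \<in> S"
  then obtain f g where fg: "smooth_on S f" "smooth_on S g" "\<forall>z\<in>S. h z = f z + g z" by blast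
  have d: "(\<lambda>z. f z + g z) differentiable at z"
    using smooth_differentiable fg \<open>z\<in>S\<close> by (intro differentiable_add) auto
  then show "h differentiable at z" using diff_local[OF S \<open>z\<in>S\<close> _ d, of h] fg(3) by simp
next
  fix h v assume "\<exists>f g. smooth_on S f \<and> smooth_on S g \<and> (\<forall>z\<in>S. h z = f z + g z)"
  then obtain f g where fg: "smooth_on S f" "smooth_on S g" "\<forall>z\<in>S. h z = f z + g z" by blast
  show "\<exists>k. (\<exists>f g. smooth_on S f \<and> smooth_on S g \<and> (\<forall>z\<in>S. k z = f z + g z)) \<and>
            (\<forall>z\<in>S. frechet_derivative h (at z) v = k z)"
  proof (intro exI[of _ "\<lambda>z. frechet_derivative f (at z) v + frechet_derivative g (at z) v"], rule conjI, rule_tac [2] ballI)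
    show "\<exists>f' g'. smooth_on S f' \<and> smooth_on S g' \<and> (\<forall>z\<in>S. frechet_derivative f (at z) v + frechet_derivative g (at z) v = f' z + g' z)"
      using smooth_D fg by blast
    fix z assume z: "z \<in> S"
    have "((\<lambda>z. f z + g z) has_derivative (\<lambda>v. frechet_derivative f (at z) v + frechet_derivative g (at z) v)) (at z)"
      using smooth_has_derivative fg z by (intro has_derivative_add) auto
    then have "((h has_derivative (\<lambda>v. frechet_derivative f (at z) v + frechet_derivative g (at z) v)) (at z))"
      using has_derivative_transform_within_open[OF _ S z, of _ _ UNIV h] fg(3) by auto
    then show "frechet_derivative h (at z) v = frechet_derivative f (at z) v + frechet_derivative g (at z) v"
      using frechet_derivative_at by metis
  qed
qed

lemma smooth_cnj:
  assumes S: "open S" and f: "smooth_on S f"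
  shows "smooth_on S (\<lambda>z. cnj (f z))"
proof (rule smooth_coind[OF S, where Q = "\<lambda>h. \<exists>f. smooth_on S f \<and> (\<forall>z\<in>S. h z = cnj (f z))"])
  show "\<exists>fa. smooth_on S fa \<and> (\<forall>z\<in>S. cnj (f z) = cnj (fa z))" using f by blast
next
  fix h z assume "\<exists>f. smooth_on S f \<and> (\<forall>z\<in>S. h z = cnj (f z))" "z \<in> S"
  then obtain f where fg: "smooth_on S f" "\<forall>z\<in>S. h z = cnj (f z)" by blast
  have d: "(\<lambda>z. cnj (f z)) differentiable at z"
    using smooth_has_derivative[OF fg(1) \<open>z\<in>S\<close>] has_derivative_cnj differentiable_def by blast
  then show "h differentiable at z" using diff_local[OF S \<open>z\<in>S\<close> _ d, of h] fg(2) by simp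
next
  fix h v assume "\<exists>f. smooth_on S f \<and> (\<forall>z\<in>S. h z = cnj (f z))"
  then obtain f where fg: "smooth_on S f" "\<forall>z\<in>S. h z = cnj (f z)" by blast
  show "\<exists>k. (\<exists>f. smooth_on S f \<and> (\<forall>z\<in>S. k z = cnj (f z))) \<and>
            (\<forall>z\<in>S. frechet_derivative h (at z) v = k z)"
  proof (intro exI[of _ "\<lambda>z. cnj (frechet_derivative f (at z) v)"], rule conjI, rule_tac [2] ballI)
    show "\<exists>f'. smooth_on S f' \<and> (\<forall>z\<in>S. cnj (frechet_derivative f (at z) v) = cnj (f' z))"
      using smooth_D fg by blast
    fix z assume z: "z \<in> S"
    have "((\<lambda>z. cnj (f z)) has_derivative (\<lambda>v. cnj (frechet_derivative f (at z) v))) (at z)"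
      using smooth_has_derivative fg z by (intro has_derivative_cnj) auto
    then have "((h has_derivative (\<lambda>v. cnj (frechet_derivative f (at z) v))) (at z))"
      using has_derivative_transform_within_open[OF _ S z, of _ _ UNIV h] fg(2) by auto
    then show "frechet_derivative h (at z) v = cnj (frechet_derivative f (at z) v)"
      using frechet_derivative_at by metis
  qed
qed


lemma smooth_const: "open S \<Longrightarrow> smooth_on S (\<lambda>z. c)"
  by (rule smooth_holomorphic) auto

lemma smooth_id: "open S \<Longrightarrow> smooth_on S (\<lambda>z. z)"
  by (rule smooth_holomorphic) auto

lemma sumprod_deriv:
  assumes "\<forall>p\<in>set ps. smooth_on S (fst p) \<and> smooth_on S (snd p)" "z \<in> S"
  shows "((\<lambda>z. \<Sum>p\<leftarrow>ps. fst p z * snd p z) has_derivative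
     (\<lambda>v. \<Sum>p\<leftarrow>ps. fst p z * frechet_derivative (snd p) (at z) v + frechet_derivative (fst p) (at z) v * snd p z)) (at z)"
  using assms(1)
proof (induction ps)
  case Nil then show ?case by simp
next
  case (Cons p ps)
  have h1: "((\<lambda>z. fst p z * snd p z) has_derivative
     (\<lambda>v. fst p z * frechet_derivative (snd p) (at z) v + frechet_derivative (fst p) (at z) v * snd p z)) (at z)"
    using Cons.prems assms(2) by (intro has_derivative_mult smooth_has_derivative) auto
  have "((\<lambda>z. \<Sum>p\<leftarrow>ps. fst p z * snd p z) has_derivative
     (\<lambda>v. \<Sum>p\<leftarrow>ps. fst p z * frechet_derivative (snd p) (at z) v + frechet_derivative (fst p) (at z) v * snd p z)) (at z)"
    using Cons.IH Cons.prems by simp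
  from has_derivative_add[OF h1 this] show ?case by simp
qed

lemma smooth_mult:
  assumes S: "open S" and f: "smooth_on S f" and g: "smooth_on S g"
  shows "smooth_on S (\<lambda>z. f z * g z)"
proof (rule smooth_coind[OF S, where Q = "\<lambda>h. \<exists>ps. (\<forall>p\<in>set ps. smooth_on S (fst p) \<and> smooth_on S (snd p))
      \<and> (\<forall>z\<in>S. h z = (\<Sum>p\<leftarrow>ps. fst p z * snd p z))"])
  show "\<exists>ps. (\<forall>p\<in>set ps. smooth_on S (fst p) \<and> smooth_on S (snd p)) \<and> (\<forall>z\<in>S. f z * g z = (\<Sum>p\<leftarrow>ps. fst p z * snd p z))"
    using f g by (intro exI[of _ "[(f,g)]"]) simp
next
  fix h z assume "\<exists>ps. (\<forall>p\<in>set ps. smooth_on S (fst p) \<and> smooth_on S (snd p))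
      \<and> (\<forall>z\<in>S. h z = (\<Sum>p\<leftarrow>ps. fst p z * snd p z))" "z \<in> S"
  then obtain ps where ps: "\<forall>p\<in>set ps. smooth_on S (fst p) \<and> smooth_on S (snd p)"
      "\<forall>z\<in>S. h z = (\<Sum>p\<leftarrow>ps. fst p z * snd p z)" by blast
  have d: "(\<lambda>z. \<Sum>p\<leftarrow>ps. fst p z * snd p z) differentiable at z"
    using sumprod_deriv[OF ps(1) \<open>z\<in>S\<close>] unfolding differentiable_def by blast
  then show "h differentiable at z" using diff_local[OF S \<open>z\<in>S\<close> _ d, of h] ps(2) by simp
next
  fix h v assume "\<exists>ps. (\<forall>p\<in>set ps. smooth_on S (fst p) \<and> smooth_on S (snd p))
      \<and> (\<forall>z\<in>S. h z = (\<Sum>p\<leftarrow>ps. fst p z * snd p z))"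
  then obtain ps where ps: "\<forall>p\<in>set ps. smooth_on S (fst p) \<and> smooth_on S (snd p)"
      "\<forall>z\<in>S. h z = (\<Sum>p\<leftarrow>ps. fst p z * snd p z)" by blast
  define ps' where "ps' = map (\<lambda>p. (fst p, \<lambda>z. frechet_derivative (snd p) (at z) v)) ps @
       map (\<lambda>p. (\<lambda>z. frechet_derivative (fst p) (at z) v, snd p)) ps"
  have ps'1: "\<forall>p\<in>set ps'. smooth_on S (fst p) \<and> smooth_on S (snd p)"
    using ps(1) unfolding ps'_def by (auto simp: smooth_D)
  have ps'2: "(\<Sum>p\<leftarrow>ps'. fst p z * snd p z) = (\<Sum>p\<leftarrow>ps. fst p z * frechet_derivative (snd p) (at z) v + frechet_derivative (fst p) (at z) v * snd p z)" for z
    unfolding ps'_def by (simp add: sum_list_addf o_def)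
  show "\<exists>k. (\<exists>ps. (\<forall>p\<in>set ps. smooth_on S (fst p) \<and> smooth_on S (snd p))
      \<and> (\<forall>z\<in>S. k z = (\<Sum>p\<leftarrow>ps. fst p z * snd p z))) \<and> (\<forall>z\<in>S. frechet_derivative h (at z) v = k z)"
  proof (rule exI[of _ "\<lambda>z. \<Sum>p\<leftarrow>ps'. fst p z * snd p z"], rule conjI, rule_tac [2] ballI)
    show "\<exists>psa. (\<forall>p\<in>set psa. smooth_on S (fst p) \<and> smooth_on S (snd p)) \<and>
          (\<forall>z\<in>S. (\<Sum>p\<leftarrow>ps'. fst p z * snd p z) = (\<Sum>p\<leftarrow>psa. fst p z * snd p z))"
      by (rule exI[of _ ps']) (simp add: ps'1)
    fix z assume z: "z \<in> S"
    have hd: "(h has_derivative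
     (\<lambda>v. \<Sum>p\<leftarrow>ps. fst p z * frechet_derivative (snd p) (at z) v + frechet_derivative (fst p) (at z) v * snd p z)) (at z)"
      by (rule has_derivative_transform_within_open[OF sumprod_deriv[OF ps(1) z] S z]) (simp add: ps(2))
    then show "frechet_derivative h (at z) v = (\<Sum>p\<leftarrow>ps'. fst p z * snd p z)"
      by (simp add: ps'2 frechet_derivative_at[OF hd, symmetric])
  qed
qed

lemma smooth_neg:
  assumes S: "open S" and f: "smooth_on S f"
  shows "smooth_on S (\<lambda>z. - f z)"
  using smooth_local[OF S smooth_mult[OF S smooth_const[OF S, of "-1"] f]] by simp

lemma smooth_divide:
  assumes S: "open S" and g: "smooth_on S g" and f: "smooth_on S f" and nz: "\<forall>z\<in>S. f z \<noteq> 0"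
  shows "smooth_on S (\<lambda>z. g z / f z)"
proof (rule smooth_coind[OF S, where Q = "\<lambda>h. \<exists>g f. smooth_on S g \<and> smooth_on S f \<and> (\<forall>z\<in>S. f z \<noteq> 0)
      \<and> (\<forall>z\<in>S. h z = g z / f z)"])
  show "\<exists>ga fa. smooth_on S ga \<and> smooth_on S fa \<and> (\<forall>z\<in>S. fa z \<noteq> 0) \<and> (\<forall>z\<in>S. g z / f z = ga z / fa z)"
    by (intro exI[of _ g] exI[of _ f]) (simp add: g f nz)
next
  fix h z assume "\<exists>g f. smooth_on S g \<and> smooth_on S f \<and> (\<forall>z\<in>S. f z \<noteq> 0) \<and> (\<forall>z\<in>S. h z = g z / f z)" "z \<in> S"
  then obtain g f where gf: "smooth_on S g" "smooth_on S f" "\<forall>z\<in>S. f z \<noteq> 0" "\<forall>z\<in>S. h z = g z / f z" by blast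
  have d: "(\<lambda>z. g z / f z) differentiable at z"
    using has_derivative_divide[OF smooth_has_derivative[OF gf(1) \<open>z\<in>S\<close>] smooth_has_derivative[OF gf(2) \<open>z\<in>S\<close>] gf(3)[rule_format, OF \<open>z\<in>S\<close>]]
    unfolding differentiable_def by blast
  then show "h differentiable at z" using diff_local[OF S \<open>z\<in>S\<close> _ d, of h] gf(4) by simp
next
  fix h v assume "\<exists>g f. smooth_on S g \<and> smooth_on S f \<and> (\<forall>z\<in>S. f z \<noteq> 0) \<and> (\<forall>z\<in>S. h z = g z / f z)"
  then obtain g f where gf: "smooth_on S g" "smooth_on S f" "\<forall>z\<in>S. f z \<noteq> 0" "\<forall>z\<in>S. h z = g z / f z" by blast
  define N where "N = (\<lambda>z. frechet_derivative g (at z) v * f z + (- g z) * frechet_derivative f (at z) v)"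
  have N: "smooth_on S N" unfolding N_def
    by (rule smooth_add[OF S smooth_mult[OF S smooth_D[OF gf(1)] gf(2)] smooth_mult[OF S smooth_neg[OF S gf(1)] smooth_D[OF gf(2)]]])
  have ff: "smooth_on S (\<lambda>z. f z * f z)" by (intro smooth_mult S gf(2))
  show "\<exists>k. (\<exists>g f. smooth_on S g \<and> smooth_on S f \<and> (\<forall>z\<in>S. f z \<noteq> 0) \<and> (\<forall>z\<in>S. k z = g z / f z))
     \<and> (\<forall>z\<in>S. frechet_derivative h (at z) v = k z)"
  proof (rule exI[of _ "\<lambda>z. N z / (f z * f z)"], rule conjI, rule_tac [2] ballI)
    show "\<exists>ga fa. smooth_on S ga \<and> smooth_on S fa \<and> (\<forall>z\<in>S. fa z \<noteq> 0) \<and> (\<forall>z\<in>S. N z / (f z * f z) = ga z / fa z)"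
      using N ff gf(3) by (intro exI[of _ N] exI[of _ "\<lambda>z. f z * f z"]) simp
    fix z assume z: "z \<in> S"
    have hd: "(h has_derivative (\<lambda>w. - g z * (inverse (f z) * frechet_derivative f (at z) w * inverse (f z)) + frechet_derivative g (at z) w / f z)) (at z)"
      by (rule has_derivative_transform_within_open[OF has_derivative_divide[OF smooth_has_derivative[OF gf(1) z] smooth_has_derivative[OF gf(2) z] gf(3)[rule_format, OF z]] S z])
        (simp add: gf(4))
    then have "frechet_derivative h (at z) v = - g z * (inverse (f z) * frechet_derivative f (at z) v * inverse (f z)) + frechet_derivative g (at z) v / f z"
      by (simp add: frechet_derivative_at[OF hd, symmetric])
    also have "\<dots> = N z / (f z * f z)" using gf(3) z unfolding N_def by (simp add: field_simps)
    finally show "frechet_derivative h (at z) v = N z / (f z * f z)" .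
  qed
qed


lemma pole_factor:
  assumes "hol_simple_pole h"
  shows "\<exists>r>0. \<exists>H. H holomorphic_on ball 0 r \<and> H 0 \<noteq> 0 \<and> (\<forall>z\<in>ball 0 r - {0}. H z = z * h z)"
proof -
  have hol: "h holomorphic_on ball 0 1 - {0}" and pole: "is_pole h 0" and ord: "zorder h 0 = -1"
    using assms unfolding hol_simple_pole_def by auto
  have iso: "isolated_singularity_at h 0" by (rule isolated_singularity_at_holomorphic[OF hol]) auto
  have ness: "not_essential h 0" using pole unfolding not_essential_def by blast
  have freq: "\<exists>\<^sub>F w in at (0::complex). h w \<noteq> 0"
    using non_zero_neighbour_pole[OF pole] by (simp add: eventually_frequently)
  obtain r where r: "zor_poly h 0 0 \<noteq> 0" "r > 0" "zor_poly h 0 holomorphic_on cball 0 r"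
     "\<forall>w\<in>cball 0 r - {0}. h w = zor_poly h 0 w * (w - 0) powi (zorder h 0)"
    using zorder_exist[OF iso ness freq] by blast
  show ?thesis
  proof (intro exI conjI ballI)
    show "r > 0" by fact
    show "zor_poly h 0 holomorphic_on ball 0 r" using r(3) by (rule holomorphic_on_subset) auto
    show "zor_poly h 0 0 \<noteq> 0" by fact
    fix z assume z: "z \<in> ball (0::complex) r - {0}"
    then have "h z = zor_poly h 0 z * z powi (-1)" using r(4) ord by auto
    then show "zor_poly h 0 z = z * h z" using z by (simp add: power_int_minus field_simps)
  qed
qed

lemma adm_factor:
  assumes "admissible h"
  shows "\<exists>r>0. \<exists>H. smooth_on (ball 0 r) H \<and> (\<forall>z\<in>ball 0 r - {0}. H z = z * h z)"
proof -
  from assms consider g where "smooth_on (ball 0 1) g" "\<forall>z\<in>ball 0 1 - {0}. g z = h z" | "hol_simple_pole h"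
    unfolding admissible_def by blast
  then show ?thesis
  proof cases
    case (1 g)
    show ?thesis
    proof (intro exI conjI ballI)
      show "smooth_on (ball 0 1) (\<lambda>z. z * g z)" by (rule smooth_mult[OF _ smooth_id 1(1)]) auto
      fix z assume "z \<in> ball (0::complex) 1 - {0}" then show "z * g z = z * h z" using 1(2) by simp
    qed simp
  next
    case 2
    then obtain r H where "r > 0" "H holomorphic_on ball 0 r" "\<forall>z\<in>ball 0 r - {0}. H z = z * h z"
      using pole_factor by blast
    then show ?thesis using smooth_holomorphic[of "ball 0 r" H] by auto
  qed
qed


lemma eq_lemma:
  fixes H f f1 f2 :: "complex \<Rightarrow> complex"
  assumes "z \<noteq> 0" "E z \<noteq> 0"
    and "E z = (z * cnj z) * of_real ((cmod (f1 z))\<^sup>2 + (cmod (f2 z))\<^sup>2)"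
    and "H z = z * f z"
  shows "H z * cnj z / E z = f z / of_real ((cmod (f1 z))\<^sup>2 + (cmod (f2 z))\<^sup>2)"
proof -
  have "cnj z \<noteq> 0" using assms(1) by simp
  moreover have "of_real ((cmod (f1 z))\<^sup>2 + (cmod (f2 z))\<^sup>2) \<noteq> (0::complex)" using assms(2,3) by auto
  ultimately show ?thesis using assms by (simp add: field_simps)
qed

theorem lemma2p1:
  fixes f f1 f2 :: "complex \<Rightarrow> complex"
  assumes "admissible f" and "admissible f1" and "admissible f2"
    and "hol_simple_pole f1"
  defines "\<phi> \<equiv> (\<lambda>z. if z = 0 then 0 else f z / of_real ((cmod (f1 z))\<^sup>2 + (cmod (f2 z))\<^sup>2))"
  shows "(\<exists>r>0. (\<forall>z\<in>ball 0 r - {0}. (cmod (f1 z))\<^sup>2 + (cmod (f2 z))\<^sup>2 \<noteq> 0) \<and> smooth_on (ball 0 r) \<phi>)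
         \<and> (hol_simple_pole f \<longrightarrow> dim (range (frechet_derivative \<phi> (at 0))) = DIM(complex))"
proof -
  obtain r1 H1 where r1: "r1>0" "H1 holomorphic_on ball 0 r1" "H1 0 \<noteq> 0" "\<forall>z\<in>ball 0 r1 - {0}. H1 z = z * f1 z"
    using pole_factor[OF assms(4)] by blast
  obtain r2 H2 where r2: "r2>0" "smooth_on (ball 0 r2) H2" "\<forall>z\<in>ball 0 r2 - {0}. H2 z = z * f2 z"
    using adm_factor[OF assms(3)] by blast
  obtain r0 H0 where r0: "r0>0" "smooth_on (ball 0 r0) H0" "\<forall>z\<in>ball 0 r0 - {0}. H0 z = z * f z"
    using adm_factor[OF assms(1)] by blast
  define E where "E = (\<lambda>z. H1 z * cnj (H1 z) + H2 z * cnj (H2 z))"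
  define ra where "ra = min r1 r2"
  have ra: "ra > 0" using r1 r2 by (simp add: ra_def)
  have sub1: "ball 0 ra \<subseteq> ball 0 r1" "ball 0 ra \<subseteq> ball 0 r2" by (auto simp: ra_def)
  have H1s: "smooth_on (ball 0 ra) H1"
    using smooth_holomorphic[OF _ r1(2)] smooth_mono[OF sub1(1)] by auto
  have H2s: "smooth_on (ball 0 ra) H2"
    using r2(2) smooth_mono[OF sub1(2)] by auto
  have Es: "smooth_on (ball 0 ra) E" unfolding E_def
    by (intro smooth_add smooth_mult smooth_cnj H1s H2s open_ball)
  have "E 0 = of_real ((cmod (H1 0))\<^sup>2 + (cmod (H2 0))\<^sup>2)"
    unfolding E_def by (simp only: of_real_add complex_norm_square)
  moreover have "(cmod (H1 0))\<^sup>2 + (cmod (H2 0))\<^sup>2 > 0" using r1(3) by (simp add: add_pos_nonneg)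
  ultimately have E0: "E 0 \<noteq> 0" by (metis of_real_eq_0_iff order_less_irrefl)
  have "continuous (at 0) E"
    using smooth_differentiable[OF Es] ra differentiable_imp_continuous_within[of E 0 UNIV] by simp
  then obtain e where e: "e > 0" "\<forall>y. dist 0 y < e \<longrightarrow> E y \<noteq> 0"
    using continuous_at_avoid E0 by blast
  define r where "r = min ra (min r0 e)"
  have r: "r > 0" using ra r0 e by (simp add: r_def)
  have Enz: "\<forall>z\<in>ball 0 r. E z \<noteq> 0" using e(2) by (simp add: r_def)
  have key: "\<forall>z\<in>ball (0::complex) r - {0}. E z = (z * cnj z) * of_real ((cmod (f1 z))\<^sup>2 + (cmod (f2 z))\<^sup>2)"
  proof
    fix z assume z: "z \<in> ball (0::complex) r - {0}"
    have "of_real ((cmod (f1 z))\<^sup>2 + (cmod (f2 z))\<^sup>2) = f1 z * cnj (f1 z) + f2 z * cnj (f2 z)"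
      by (simp only: of_real_add complex_norm_square)
    moreover have "H1 z = z * f1 z" "H2 z = z * f2 z" using z r1(4) r2(3) by (auto simp: r_def ra_def)
    ultimately show "E z = (z * cnj z) * of_real ((cmod (f1 z))\<^sup>2 + (cmod (f2 z))\<^sup>2)"
      unfolding E_def by (simp add: algebra_simps)
  qed
  have nz: "\<forall>z\<in>ball (0::complex) r - {0}. (cmod (f1 z))\<^sup>2 + (cmod (f2 z))\<^sup>2 \<noteq> 0"
    using key Enz by fastforce
  have rsub: "ball 0 r \<subseteq> ball 0 ra" "ball 0 r \<subseteq> ball 0 r0" by (auto simp: r_def)
  define \<Phi> where "\<Phi> = (\<lambda>z. H0 z * cnj z / E z)"
  have \<Phi>s: "smooth_on (ball 0 r) \<Phi>" unfolding \<Phi>_def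
    using smooth_mono[OF rsub(1) Es] smooth_mono[OF rsub(2) r0(2)] Enz
    by (intro smooth_divide smooth_mult smooth_cnj smooth_id open_ball) auto
  have \<Phi>eq: "\<forall>z\<in>ball 0 r. \<Phi> z = \<phi> z"
  proof
    fix z assume z: "z \<in> ball (0::complex) r"
    show "\<Phi> z = \<phi> z"
    proof (cases "z = 0")
      case True then show ?thesis by (simp add: \<Phi>_def \<phi>_def)
    next
      case False
      have "H0 z = z * f z" using z False r0(3) rsub(2) by (auto simp: r_def)
      then show ?thesis unfolding \<Phi>_def \<phi>_def using eq_lemma[OF False, of E f1 f2 H0 f] False z key Enz by auto
    qed
  qed
  have part1: "\<exists>r>0. (\<forall>z\<in>ball (0::complex) r - {0}. (cmod (f1 z))\<^sup>2 + (cmod (f2 z))\<^sup>2 \<noteq> 0) \<and> smooth_on (ball 0 r) \<phi>"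
    using r nz smooth_local[OF open_ball \<Phi>s \<Phi>eq] by blast
  have part2: "dim (range (frechet_derivative \<phi> (at 0))) = DIM(complex)" if hf: "hol_simple_pole f"
  proof -
    obtain rf Hf where rf: "rf>0" "Hf holomorphic_on ball 0 rf" "Hf 0 \<noteq> 0" "\<forall>z\<in>ball 0 rf - {0}. Hf z = z * f z"
      using pole_factor[OF hf] by blast
    define rb where "rb = min r rf"
    have rb: "rb > 0" using r rf by (simp add: rb_def)
    have sub2: "ball 0 rb \<subseteq> ball 0 rf" "ball 0 rb \<subseteq> ball 0 ra" by (auto simp: rb_def r_def)
    have Hfs: "smooth_on (ball 0 rb) Hf"
      using smooth_holomorphic[OF _ rf(2)] smooth_mono[OF sub2(1)] by auto
    have Eb: "smooth_on (ball 0 rb) E" using smooth_mono[OF sub2(2) Es] .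
    define \<Psi> where "\<Psi> = (\<lambda>z. Hf z * cnj z / E z)"
    have \<Psi>eq: "\<forall>z\<in>ball 0 rb. \<Psi> z = \<phi> z"
    proof
      fix z assume z: "z \<in> ball (0::complex) rb"
      show "\<Psi> z = \<phi> z"
      proof (cases "z = 0")
        case True then show ?thesis by (simp add: \<Psi>_def \<phi>_def)
      next
        case False
        have "Hf z = z * f z" using z False rf(4) by (auto simp: rb_def)
        moreover have "z \<in> ball (0::complex) r" using z by (auto simp: rb_def)
        ultimately show ?thesis unfolding \<Psi>_def \<phi>_def using eq_lemma[OF False, of E f1 f2 Hf f] False key Enz by auto
      qed
    qed
    have 0: "(0::complex) \<in> ball 0 rb" using rb by simp
    have dN: "((\<lambda>z. Hf z * cnj z) has_derivative (\<lambda>v. Hf 0 * cnj v + frechet_derivative Hf (at 0) v * cnj 0)) (at 0)"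
      by (intro has_derivative_mult smooth_has_derivative[OF Hfs 0] has_derivative_cnj has_derivative_ident)
    have d\<Psi>: "(\<Psi> has_derivative (\<lambda>v. Hf 0 / E 0 * cnj v)) (at 0)"
      using has_derivative_divide[OF dN smooth_has_derivative[OF Eb 0] E0] unfolding \<Psi>_def
      by (simp add: field_simps)
    have "(\<phi> has_derivative (\<lambda>v. Hf 0 / E 0 * cnj v)) (at 0)"
      by (rule has_derivative_transform_within_open[OF d\<Psi> open_ball 0]) (simp add: \<Psi>eq)
    then have fd: "frechet_derivative \<phi> (at 0) = (\<lambda>v. Hf 0 / E 0 * cnj v)"
      by (simp add: frechet_derivative_at[symmetric])
    have c: "Hf 0 / E 0 \<noteq> 0" using rf(3) E0 by simp
    have "range (\<lambda>v. Hf 0 / E 0 * cnj v) = UNIV"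
    proof (rule surjI)
      fix w show "Hf 0 / E 0 * cnj (cnj (w / (Hf 0 / E 0))) = w" using c by simp
    qed
    then show ?thesis using fd by simp
  qed
  show ?thesis using part1 part2 by blast
qed

end
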